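(* Let $N\ge2$. The action of the braid-cyclic group $BC_N$ on the set of trees with $N$ edges labelled $0,1,\dots,N-1$ (described in the context) is transitive.
   Context: Trees have $N$ edges labelled bijectively by $0,\dots,N-1$ and are considered up to label-preserving isomorphism. $BC_N$ is the subgroup of $\mathrm{Aut}(F(s_0,\dots,s_{N-1}))$ generated by $\lambda$ and $u_1,\dots,u_{N-1}$ with $\lambda(s_k)=s_{k+1}$ (indices mod $N$), $u_k(s_{k-1})=s_k$, $u_k(s_k)=s_k^{-1}s_{k-1}s_k$, $u_k(s_l)=s_l$ for $l\neq k-1,k$. It acts on labelled trees as follows: $u_k$ affects only the edges labelled $k-1$ and $k$; if they have no common vertex they exchange labels; if the edge labelled $k-1$ is $AB$ and the edge labelled $k$ is $AC$, then $AB$ receives label $k$, $AC$ is erased, and a new edge $BC$ labelled $k-1$ is drawn. $\lambda$ leaves the tree unchanged and shifts labels $i\mapsto i+1\pmod N$. *)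

theory Defs
  imports Main
begin

text \<open>A labelled tree with N edges is represented with vertex set {0..N};
  t k is the (two-element) set of endpoints of the edge labelled k, for k < N.
  Values t k for k >= N are irrelevant.\<close>

type_synonym ltree = "nat \<Rightarrow> nat set"

definition tree_adj :: "nat \<Rightarrow> ltree \<Rightarrow> nat \<Rightarrow> nat \<Rightarrow> bool" where
  "tree_adj N t x y \<longleftrightarrow> (\<exists>k<N. t k = {x, y})"

text \<open>N edges on N+1 vertices forming a connected graph = a tree.\<close>
definition is_ltree :: "nat \<Rightarrow> ltree \<Rightarrow> bool" where
  "is_ltree N t \<longleftrightarrow>
     (\<forall>k<N. \<exists>a b. a \<noteq> b \<and> a \<le> N \<and> b \<le> N \<and> t k = {a, b}) \<and>
     (\<forall>x\<le>N. \<forall>y\<le>N. (tree_adj N t)\<^sup>*\<^sup>* x y)"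

definition ltree_iso :: "nat \<Rightarrow> ltree \<Rightarrow> ltree \<Rightarrow> bool" where
  "ltree_iso N t t' \<longleftrightarrow>
     (\<exists>f. bij_betw f {0..N} {0..N} \<and> (\<forall>k<N. t' k = f ` t k))"

definition u_move :: "nat \<Rightarrow> ltree \<Rightarrow> ltree" where
  "u_move k t =
     (let P = t (k - 1); Q = t k in
      if P \<inter> Q = {} then t(k - 1 := Q, k := P)
      else (let A = the_elem (P \<inter> Q); B = the_elem (P - {A}); C = the_elem (Q - {A})
            in t(k := P, k - 1 := {B, C})))"

text \<open>Action of lambda: label i becomes i+1 mod N.\<close>
definition lambda_move :: "nat \<Rightarrow> ltree \<Rightarrow> ltree" where
  "lambda_move N t = (\<lambda>i. if i < N then t ((i + N - 1) mod N) else t i)"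

text \<open>One generator step between (isomorphism classes of) trees.\<close>
definition bc_step :: "nat \<Rightarrow> ltree \<Rightarrow> ltree \<Rightarrow> bool" where
  "bc_step N t t' \<longleftrightarrow> is_ltree N t \<and> is_ltree N t' \<and>
     ((\<exists>k. 1 \<le> k \<and> k \<le> N - 1 \<and> ltree_iso N (u_move k t) t') \<or>
      ltree_iso N (lambda_move N t) t')"

text \<open>Same orbit under the group generated by the generators (generators act
  bijectively, so the orbit is the equivalence closure of generator steps).\<close>
definition bc_orbit_rel :: "nat \<Rightarrow> ltree \<Rightarrow> ltree \<Rightarrow> bool" where
  "bc_orbit_rel N = (symclp (bc_step N))\<^sup>*\<^sup>*"

end

theory Submission
  imports Defs
begin

lemma iso_refl: "ltree_iso N t t"
  unfolding ltree_iso_def by (rule exI[of _ id]) auto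

lemma R_trans: "bc_orbit_rel N a b \<Longrightarrow> bc_orbit_rel N b c \<Longrightarrow> bc_orbit_rel N a c"
  unfolding bc_orbit_rel_def by (rule rtranclp_trans)

lemma R_sym: "bc_orbit_rel N a b \<Longrightarrow> bc_orbit_rel N b a"
  unfolding bc_orbit_rel_def
proof (induction rule: rtranclp_induct)
  case base then show ?case by simp
next
  case (step y z)
  have "symclp (bc_step N) z y" using step(2) by (auto simp: symclp_def)
  then show ?case using step(3) by (rule converse_rtranclp_into_rtranclp)
qed

lemma R_of_step: "bc_step N a b \<Longrightarrow> bc_orbit_rel N a b"
  unfolding bc_orbit_rel_def by (auto simp: symclp_def)

lemma R_u: "is_ltree N t \<Longrightarrow> is_ltree N (u_move k t) \<Longrightarrow> 1 \<le> k \<Longrightarrow> k < N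
  \<Longrightarrow> bc_orbit_rel N t (u_move k t)"
  by (rule R_of_step) (auto simp: bc_step_def intro: iso_refl)

lemma rtranclp_lift:
  assumes H: "\<And>x y. r x y \<Longrightarrow> s\<^sup>*\<^sup>* x y" and "r\<^sup>*\<^sup>* a b"
  shows "s\<^sup>*\<^sup>* a b"
  using assms(2) by induction (auto intro: rtranclp_trans H)

lemma is_ltree_transfer:
  assumes "is_ltree N t"
    and "\<forall>k<N. \<exists>a b. a \<noteq> b \<and> a \<le> N \<and> b \<le> N \<and> t' k = {a, b}"
    and "\<And>x y. tree_adj N t x y \<Longrightarrow> (tree_adj N t')\<^sup>*\<^sup>* x y"
  shows "is_ltree N t'"
  using assms unfolding is_ltree_def by (blast intro: rtranclp_lift)

lemma elems_le: "is_ltree N t \<Longrightarrow> j < N \<Longrightarrow> x \<in> t j \<Longrightarrow> x \<le> N"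
  unfolding is_ltree_def by fastforce

lemma adjI: "k < N \<Longrightarrow> t k = {x, y} \<Longrightarrow> tree_adj N t x y"
  unfolding tree_adj_def by blast

lemma adjI': "k < N \<Longrightarrow> t k = {x, y} \<Longrightarrow> tree_adj N t y x"
  unfolding tree_adj_def by (metis insert_commute)

lemma u_share:
  assumes "t (k-1) = {A,B}" "t k = {A,C}" "A\<noteq>B" "A\<noteq>C" "B\<noteq>C"
  shows "u_move k t = t(k := {A,B}, k-1 := {B,C})"
proof -
  have 1: "{A,B} \<inter> {A,C} = {A}" using assms by auto
  have 2: "{A,B} - {A} = {B}" "{A,C} - {A} = {C}" using assms by auto
  show ?thesis unfolding u_move_def Let_def using assms 1 2 by simp
qed

lemma u_disj: "t (k-1) \<inter> t k = {} \<Longrightarrow> u_move k t = t(k-1 := t k, k := t (k-1))"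
  by (simp add: u_move_def Let_def)

lemma share_tree:
  assumes T: "is_ltree N t" and k: "1 \<le> k" "k < N"
    and e: "t (k-1) = {A,B}" "t k = {A,C}" "A\<noteq>B" "A\<noteq>C" "B\<noteq>C"
  shows "is_ltree N (t(k := {A,B}, k-1 := {B,C}))" (is "is_ltree N ?t")
proof (rule is_ltree_transfer[OF T])
  have le: "A \<le> N" "B \<le> N" "C \<le> N"
  proof -
    have "A \<in> t (k-1)" "B \<in> t (k-1)" "C \<in> t k" using e by auto
    moreover have "k - 1 < N" using k by arith
    ultimately show "A \<le> N" "B \<le> N" "C \<le> N" using elems_le[OF T] k by blast+
  qed
  show "\<forall>j<N. \<exists>a b. a \<noteq> b \<and> a \<le> N \<and> b \<le> N \<and> ?t j = {a, b}"
  proof (intro allI impI)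
    fix j assume j: "j < N"
    show "\<exists>a b. a \<noteq> b \<and> a \<le> N \<and> b \<le> N \<and> ?t j = {a, b}"
    proof (cases "j = k - 1")
      case True then show ?thesis using le e by auto
    next
      case False
      show ?thesis
      proof (cases "j = k")
        case True then show ?thesis using le e False by auto
      next
        case F2: False
        then have "?t j = t j" using False by simp
        then show ?thesis using T j unfolding is_ltree_def by metis
      qed
    qed
  qed
  have kk: "k \<noteq> k - 1" using k by arith
  have tk: "?t k = {A,B}" using kk by simp
  have tk1: "?t (k-1) = {B,C}" by simp
  have k1: "k - 1 < N" using k by arith
  have a1: "tree_adj N ?t A B" "tree_adj N ?t B A"
    unfolding tree_adj_def using k(2) tk by (metis insert_commute)+
  have a2: "tree_adj N ?t B C" "tree_adj N ?t C B"
    unfolding tree_adj_def using k1 tk1 by (metis insert_commute)+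
  fix x y assume "tree_adj N t x y"
  then obtain j where j: "j < N" "t j = {x,y}" unfolding tree_adj_def by blast
  show "(tree_adj N ?t)\<^sup>*\<^sup>* x y"
  proof (cases "j = k \<or> j = k - 1")
    case False
    then have "?t j = {x,y}" using j by simp
    then have "tree_adj N ?t x y" using j(1) by (rule adjI[rotated])
    then show ?thesis by simp
  next
    case True
    then have "{x,y} = {A,B} \<or> {x,y} = {A,C}" using j e by auto
    then have "(x = A \<and> y = B) \<or> (x = B \<and> y = A) \<or> (x = A \<and> y = C) \<or> (x = C \<and> y = A)"
      by (auto simp: doubleton_eq_iff)
    moreover have "(tree_adj N ?t)\<^sup>*\<^sup>* A C" "(tree_adj N ?t)\<^sup>*\<^sup>* C A"
      using a1 a2 by (meson r_into_rtranclp rtranclp.rtrancl_into_rtrancl)+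
    ultimately show ?thesis using a1 a2 by auto
  qed
qed

lemma disj_tree:
  assumes T: "is_ltree N t" and k: "1 \<le> k" "k < N"
  shows "is_ltree N (t(k-1 := t k, k := t (k-1)))" (is "is_ltree N ?t")
proof (rule is_ltree_transfer[OF T])
  have kk: "k \<noteq> k - 1" using k by arith
  have k1: "k - 1 < N" using k by arith
  have tk: "?t k = t (k-1)" by simp
  have tk1: "?t (k-1) = t k" using kk by simp
  have E: "\<exists>a b. a \<noteq> b \<and> a \<le> N \<and> b \<le> N \<and> t j = {a, b}" if "j < N" for j
    using T that unfolding is_ltree_def by blast
  show "\<forall>j<N. \<exists>a b. a \<noteq> b \<and> a \<le> N \<and> b \<le> N \<and> ?t j = {a, b}"
  proof (intro allI impI)
    fix j assume j: "j < N"
    show "\<exists>a b. a \<noteq> b \<and> a \<le> N \<and> b \<le> N \<and> ?t j = {a, b}"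
    proof (cases "j = k - 1")
      case True then show ?thesis using E[OF k(2)] tk1 by simp
    next
      case False
      show ?thesis
      proof (cases "j = k")
        case True then show ?thesis using E[OF k1] tk by simp
      next
        case F2: False
        then have "?t j = t j" using False by simp
        then show ?thesis using E[OF j] by simp
      qed
    qed
  qed
  fix x y assume "tree_adj N t x y"
  then obtain j where j: "j < N" "t j = {x,y}" unfolding tree_adj_def by blast
  have "tree_adj N ?t x y"
  proof (cases "j = k \<or> j = k - 1")
    case False
    then have "?t j = {x,y}" using j by simp
    then show ?thesis using j(1) by (rule adjI[rotated])
  next
    case True
    then show ?thesis
    proof
      assume "j = k" then have "?t (k-1) = {x,y}" using tk1 j by simp
      then show ?thesis using k1 by (rule adjI[rotated])
    next
      assume "j = k - 1" then have "?t k = {x,y}" using tk j by simp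
      then show ?thesis using k(2) by (rule adjI[rotated])
    qed
  qed
  then show "(tree_adj N ?t)\<^sup>*\<^sup>* x y" by simp
qed

lemma sd1:
  assumes "P = {a,b}" "Q = {a,c}" "a\<noteq>b" "a\<noteq>c" "P \<noteq> Q"
  shows "\<exists>A B C. P = {A,B} \<and> Q = {A,C} \<and> A\<noteq>B \<and> A\<noteq>C \<and> B\<noteq>C"
proof -
  have "b \<noteq> c"
  proof
    assume "b = c" then have "P = Q" using assms(1,2) by simp
    then show False using assms(5) by simp
  qed
  then show ?thesis using assms(1-4) by (intro exI[of _ a] exI[of _ b] exI[of _ c]) simp
qed

lemma share_decomp:
  assumes "P = {a,b}" "Q = {a',b'}" "a\<noteq>b" "a'\<noteq>b'" "P \<noteq> Q" "P \<inter> Q \<noteq> {}"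
  shows "\<exists>A B C. P = {A,B} \<and> Q = {A,C} \<and> A\<noteq>B \<and> A\<noteq>C \<and> B\<noteq>C"
proof -
  obtain z where z: "z \<in> P" "z \<in> Q" using assms(6) by blast
  have z1: "z = a \<or> z = b" using z(1) assms(1) by simp
  have z2: "z = a' \<or> z = b'" using z(2) assms(2) by simp
  have "a = a' \<or> a = b' \<or> b = a' \<or> b = b'" using z1 z2 by blast
  then show ?thesis
  proof (elim disjE)
    assume h: "a = a'"
    have Qe: "Q = {a,b'}" using assms(2) h by simp
    show ?thesis by (rule sd1[OF assms(1) Qe assms(3) _ assms(5)]) (use assms(4) h in simp)
  next
    assume h: "a = b'"
    have Qe: "Q = {a,a'}" using assms(2) h by (simp add: insert_commute)
    show ?thesis by (rule sd1[OF assms(1) Qe assms(3) _ assms(5)]) (use assms(4) h in simp)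
  next
    assume h: "b = a'"
    have Qe: "Q = {b,b'}" using assms(2) h by simp
    have Pe: "P = {b,a}" using assms(1) by (simp add: insert_commute)
    show ?thesis by (rule sd1[OF Pe Qe _ _ assms(5)]) (use assms(3,4) h in simp_all)
  next
    assume h: "b = b'"
    have Qe: "Q = {b,a'}" using assms(2) h by (simp add: insert_commute)
    have Pe: "P = {b,a}" using assms(1) by (simp add: insert_commute)
    show ?thesis by (rule sd1[OF Pe Qe _ _ assms(5)]) (use assms(3,4) h in simp_all)
  qed
qed

lemma edge_of: "is_ltree N t \<Longrightarrow> j < N \<Longrightarrow> \<exists>a b. a \<noteq> b \<and> a \<le> N \<and> b \<le> N \<and> t j = {a, b}"
  unfolding is_ltree_def by blast

lemma fwd:
  assumes T: "is_ltree N t" and k: "1 \<le> k" "k < N" and ne: "t (k-1) \<noteq> t k"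
  shows "\<exists>t1. bc_orbit_rel N t t1 \<and> is_ltree N t1 \<and> t1 k = t (k-1) \<and>
     (\<forall>j. j \<noteq> k-1 \<and> j \<noteq> k \<longrightarrow> t1 j = t j) \<and>
     (\<forall>x. x \<notin> t (k-1) \<longrightarrow> (x \<in> t1 (k-1) \<longleftrightarrow> x \<in> t k))"
proof -
  have kk: "k \<noteq> k - 1" using k by arith
  have k1: "k - 1 < N" using k by arith
  obtain a b where ab: "a \<noteq> b" "t (k-1) = {a,b}" using edge_of[OF T k1] by blast
  obtain a' b' where ab': "a' \<noteq> b'" "t k = {a',b'}" using edge_of[OF T k(2)] by blast
  show ?thesis
  proof (cases "t (k-1) \<inter> t k = {}")
    case True
    let ?t1 = "t(k-1 := t k, k := t (k-1))"
    have u: "u_move k t = ?t1" using True by (rule u_disj)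
    have L: "is_ltree N ?t1" using disj_tree[OF T k] .
    have R: "bc_orbit_rel N t ?t1" using R_u[OF T _ k] L u by simp
    have p1: "?t1 k = t (k-1)" by simp
    have p2: "\<forall>j. j \<noteq> k-1 \<and> j \<noteq> k \<longrightarrow> ?t1 j = t j" by simp
    have p3: "\<forall>x. x \<notin> t (k-1) \<longrightarrow> (x \<in> ?t1 (k-1) \<longleftrightarrow> x \<in> t k)" using kk by simp
    show ?thesis using L R p1 p2 p3 by blast
  next
    case False
    then obtain A B C where abc: "t (k-1) = {A,B}" "t k = {A,C}" "A\<noteq>B" "A\<noteq>C" "B\<noteq>C"
      using share_decomp[OF ab(2) ab'(2) ab(1) ab'(1) ne] by blast
    let ?t1 = "t(k := {A,B}, k-1 := {B,C})"
    have u: "u_move k t = ?t1" using u_share[OF abc] .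
    have L: "is_ltree N ?t1" using share_tree[OF T k abc] .
    have R: "bc_orbit_rel N t ?t1" using R_u[OF T _ k] L u by simp
    have p1: "?t1 k = t (k-1)" using abc kk by simp
    have p2: "\<forall>j. j \<noteq> k-1 \<and> j \<noteq> k \<longrightarrow> ?t1 j = t j" by simp
    have t1k1: "?t1 (k-1) = {B,C}" by simp
    have p3: "\<forall>x. x \<notin> t (k-1) \<longrightarrow> (x \<in> ?t1 (k-1) \<longleftrightarrow> x \<in> t k)"
      unfolding t1k1 abc by blast
    show ?thesis using L R p1 p2 p3 by blast
  qed
qed

lemma bwd:
  assumes T: "is_ltree N t" and k: "1 \<le> k" "k < N" and ne: "t (k-1) \<noteq> t k"
  shows "\<exists>t1. bc_orbit_rel N t t1 \<and> is_ltree N t1 \<and> t1 (k-1) = t k \<and>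
     (\<forall>j. j \<noteq> k-1 \<and> j \<noteq> k \<longrightarrow> t1 j = t j) \<and>
     (\<forall>x. x \<notin> t k \<longrightarrow> (x \<in> t1 k \<longleftrightarrow> x \<in> t (k-1)))"
proof -
  have kk: "k \<noteq> k - 1" using k by arith
  have k1: "k - 1 < N" using k by arith
  obtain a b where ab: "a \<noteq> b" "t (k-1) = {a,b}" using edge_of[OF T k1] by blast
  obtain a' b' where ab': "a' \<noteq> b'" "t k = {a',b'}" using edge_of[OF T k(2)] by blast
  show ?thesis
  proof (cases "t (k-1) \<inter> t k = {}")
    case True
    let ?t1 = "t(k-1 := t k, k := t (k-1))"
    have u: "u_move k t = ?t1" using True by (rule u_disj)
    have L: "is_ltree N ?t1" using disj_tree[OF T k] .
    have R: "bc_orbit_rel N t ?t1" using R_u[OF T _ k] L u by simp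
    have p1: "?t1 (k-1) = t k" using kk by simp
    have p2: "\<forall>j. j \<noteq> k-1 \<and> j \<noteq> k \<longrightarrow> ?t1 j = t j" by simp
    have p3: "\<forall>x. x \<notin> t k \<longrightarrow> (x \<in> ?t1 k \<longleftrightarrow> x \<in> t (k-1))" by simp
    show ?thesis using L R p1 p2 p3 by blast
  next
    case False
    then obtain A B C where abc: "t (k-1) = {A,B}" "t k = {A,C}" "A\<noteq>B" "A\<noteq>C" "B\<noteq>C"
      using share_decomp[OF ab(2) ab'(2) ab(1) ab'(1) ne] by blast
    let ?t1 = "t(k := {A,B}, k-1 := {B,C})"
    have u: "u_move k t = ?t1" using u_share[OF abc] .
    have L: "is_ltree N ?t1" using share_tree[OF T k abc] .
    have R: "bc_orbit_rel N t ?t1" using R_u[OF T _ k] L u by simp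
    have abc1: "?t1 (k-1) = {B,C}" "?t1 k = {B,A}" "B\<noteq>C" "B\<noteq>A" "C\<noteq>A"
      using abc kk by (simp_all add: insert_commute)
    let ?t2 = "?t1(k := {B,C}, k-1 := {C,A})"
    have u2: "u_move k ?t1 = ?t2" using u_share[OF abc1] .
    have L2: "is_ltree N ?t2" using share_tree[OF L k abc1] .
    have R2: "bc_orbit_rel N ?t1 ?t2" using R_u[OF L _ k] L2 u2 by simp
    have RR: "bc_orbit_rel N t ?t2" using R_trans[OF R R2] .
    have p1: "?t2 (k-1) = t k" using abc by (simp add: insert_commute)
    have p2: "\<forall>j. j \<noteq> k-1 \<and> j \<noteq> k \<longrightarrow> ?t2 j = t j" by simp
    have t2k: "?t2 k = {B,C}" using kk by simp
    have p3: "\<forall>x. x \<notin> t k \<longrightarrow> (x \<in> ?t2 k \<longleftrightarrow> x \<in> t (k-1))"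
      unfolding t2k abc by blast
    show ?thesis using L2 RR p1 p2 p3 by blast
  qed
qed

definition cnt :: "nat \<Rightarrow> nat \<Rightarrow> ltree \<Rightarrow> nat" where
  "cnt N c t = card {k. k < N \<and> c \<in> t k}"

lemma cnt_le: "cnt N c t \<le> N"
proof -
  have "card {k. k < N \<and> c \<in> t k} \<le> card {..<N}" by (rule card_mono) auto
  then show ?thesis unfolding cnt_def by simp
qed

lemma cnt_less:
  assumes "\<forall>k<N. c \<in> t k \<longrightarrow> c \<in> t1 k" "k0 < N" "c \<in> t1 k0" "c \<notin> t k0"
  shows "cnt N c t < cnt N c t1"
  unfolding cnt_def
proof (rule psubset_card_mono)
  show "finite {k. k < N \<and> c \<in> t1 k}" by simp
  show "{k. k < N \<and> c \<in> t k} \<subset> {k. k < N \<and> c \<in> t1 k}" using assms by blast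
qed

lemma cnt_swap:
  assumes "i < N" "j < N" "\<forall>k. k \<noteq> i \<and> k \<noteq> j \<longrightarrow> (c \<in> t1 k \<longleftrightarrow> c \<in> t k)"
    "c \<in> t1 i \<longleftrightarrow> c \<in> t j" "c \<in> t1 j \<longleftrightarrow> c \<in> t i"
  shows "cnt N c t1 = cnt N c t"
proof -
  define \<sigma> where "\<sigma> = (\<lambda>k::nat. if k = i then j else if k = j then i else k)"
  have inj: "inj_on \<sigma> {k. k < N \<and> c \<in> t k}" unfolding inj_on_def \<sigma>_def by auto
  have img: "\<sigma> ` {k. k < N \<and> c \<in> t k} = {k. k < N \<and> c \<in> t1 k}"
  proof (intro equalityI subsetI)
    fix x assume "x \<in> \<sigma> ` {k. k < N \<and> c \<in> t k}"
    then obtain y where y: "y < N" "c \<in> t y" "x = \<sigma> y" by blast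
    then show "x \<in> {k. k < N \<and> c \<in> t1 k}" using assms unfolding \<sigma>_def
      by (cases "y = i"; cases "y = j") auto
  next
    fix x assume x: "x \<in> {k. k < N \<and> c \<in> t1 k}"
    have "\<sigma> (\<sigma> x) = x" unfolding \<sigma>_def by auto
    moreover have "\<sigma> x \<in> {k. k < N \<and> c \<in> t k}" using x assms unfolding \<sigma>_def
      by (cases "x = i"; cases "x = j") auto
    ultimately show "x \<in> \<sigma> ` {k. k < N \<and> c \<in> t k}" by (metis image_eqI)
  qed
  show ?thesis unfolding cnt_def using card_image[OF inj] img by simp
qed

lemma fwd_loop:
  assumes "is_ltree N t" "q < N" "c \<notin> {X,Y}" "X \<noteq> Y" "t q = {c,X}" "t p = {X,Y}" "p < q"
  shows "\<exists>s. bc_orbit_rel N t s \<and> is_ltree N s \<and> cnt N c t < cnt N c s"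
  using assms
proof (induction "q - Suc p" arbitrary: p t)
  case 0
  then have pq: "p = q - 1" "1 \<le> q" by arith+
  have kk: "q \<noteq> q - 1" using pq by arith
  have e1: "t (q-1) = {X,Y}" "t q = {X,c}" "X \<noteq> Y" "X \<noteq> c" "Y \<noteq> c"
    using 0 pq by (auto simp: insert_commute)
  let ?t1 = "t(q := {X,Y}, q-1 := {Y,c})"
  have u1: "u_move q t = ?t1" using u_share[OF e1] .
  have L1: "is_ltree N ?t1" using share_tree[OF 0(2) pq(2) 0(3) e1] .
  have R1: "bc_orbit_rel N t ?t1" using R_u[OF 0(2) _ pq(2) 0(3)] L1 u1 by simp
  have e2: "?t1 (q-1) = {Y,c}" "?t1 q = {Y,X}" "Y \<noteq> c" "Y \<noteq> X" "c \<noteq> X"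
    using e1 kk by (simp_all add: insert_commute)
  let ?t2 = "?t1(q := {Y,c}, q-1 := {c,X})"
  have u2: "u_move q ?t1 = ?t2" using u_share[OF e2] .
  have L2: "is_ltree N ?t2" using share_tree[OF L1 pq(2) 0(3) e2] .
  have R2: "bc_orbit_rel N ?t1 ?t2" using R_u[OF L1 _ pq(2) 0(3)] L2 u2 by simp
  have "cnt N c t < cnt N c ?t2"
  proof (rule cnt_less)
    show "\<forall>k<N. c \<in> t k \<longrightarrow> c \<in> ?t2 k" by simp
    show "q - 1 < N" using 0 by arith
    show "c \<in> ?t2 (q-1)" by simp
    show "c \<notin> t (q-1)" using e1 by simp
  qed
  then show ?case using R_trans[OF R1 R2] L2 by blast
next
  case (Suc d)
  then have lt: "Suc p < q" by arith
  show ?case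
  proof (cases "t (Suc p) = {X,Y}")
    case True
    have "d = q - Suc (Suc p)" using Suc(2) by arith
    then show ?thesis using Suc.hyps(1)[of "Suc p" t] Suc.prems True lt by blast
  next
    case False
    have ne: "t (Suc p - 1) \<noteq> t (Suc p)" using False Suc.prems by simp
    have k: "1 \<le> Suc p" "Suc p < N" using lt Suc.prems by arith+
    obtain t1 where t1: "bc_orbit_rel N t t1" "is_ltree N t1" "t1 (Suc p) = t (Suc p - 1)"
      "\<forall>j. j \<noteq> Suc p - 1 \<and> j \<noteq> Suc p \<longrightarrow> t1 j = t j"
      "\<forall>x. x \<notin> t (Suc p - 1) \<longrightarrow> (x \<in> t1 (Suc p - 1) \<longleftrightarrow> x \<in> t (Suc p))"
      using fwd[OF Suc.prems(1) k ne] by blast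
    have a1: "t1 (Suc p) = {X,Y}" using t1(3) Suc.prems by simp
    have a2: "t1 q = {c,X}" using t1(4) Suc.prems lt by simp
    have cs: "cnt N c t1 = cnt N c t"
    proof (rule cnt_swap[of p N "Suc p"])
      show "p < N" "Suc p < N" using k by arith+
      show "\<forall>k. k \<noteq> p \<and> k \<noteq> Suc p \<longrightarrow> (c \<in> t1 k \<longleftrightarrow> c \<in> t k)" using t1(4) by simp
      show "c \<in> t1 p \<longleftrightarrow> c \<in> t (Suc p)" using t1(5) Suc.prems by simp
      show "c \<in> t1 (Suc p) \<longleftrightarrow> c \<in> t p" using a1 Suc.prems by simp
    qed
    have "d = q - Suc (Suc p)" using Suc(2) by arith
    then obtain s where s: "bc_orbit_rel N t1 s" "is_ltree N s" "cnt N c t1 < cnt N c s"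
      using Suc.hyps(1)[of "Suc p" t1] t1(2) a1 a2 Suc.prems lt by blast
    then show ?thesis using R_trans[OF t1(1) s(1)] cs by auto
  qed
qed

lemma bwd_loop:
  assumes "is_ltree N t" "p < N" "c \<notin> {X,Y}" "X \<noteq> Y" "t q = {c,X}" "t p = {X,Y}" "q < p"
  shows "\<exists>s. bc_orbit_rel N t s \<and> is_ltree N s \<and> cnt N c t < cnt N c s"
  using assms
proof (induction "p - Suc q" arbitrary: p t)
  case 0
  then have pq: "q = p - 1" "1 \<le> p" by arith+
  have kk: "p \<noteq> p - 1" using pq by arith
  have e1: "t (p-1) = {X,c}" "t p = {X,Y}" "X \<noteq> c" "X \<noteq> Y" "c \<noteq> Y"
    using 0 pq by (auto simp: insert_commute)
  let ?t1 = "t(p := {X,c}, p-1 := {c,Y})"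
  have u1: "u_move p t = ?t1" using u_share[OF e1] .
  have L1: "is_ltree N ?t1" using share_tree[OF 0(2) pq(2) 0(3) e1] .
  have R1: "bc_orbit_rel N t ?t1" using R_u[OF 0(2) _ pq(2) 0(3)] L1 u1 by simp
  have "cnt N c t < cnt N c ?t1"
  proof (rule cnt_less)
    show "\<forall>k<N. c \<in> t k \<longrightarrow> c \<in> ?t1 k" by simp
    show "p < N" using 0 by arith
    show "c \<in> ?t1 p" using kk by simp
    show "c \<notin> t p" using e1 by simp
  qed
  then show ?case using R1 L1 by blast
next
  case (Suc d)
  then have lt: "Suc q < p" by arith
  show ?case
  proof (cases "t (p - 1) = {X,Y}")
    case True
    have "d = (p - 1) - Suc q" using Suc(2) by arith
    moreover have "p - 1 < N" "q < p - 1" using lt Suc.prems by arith+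
    ultimately show ?thesis using Suc.hyps(1)[of "p - 1" t] Suc.prems True by blast
  next
    case False
    have ne: "t (p - 1) \<noteq> t p" using False Suc.prems by simp
    have k: "1 \<le> p" "p < N" using lt Suc.prems by arith+
    obtain t1 where t1: "bc_orbit_rel N t t1" "is_ltree N t1" "t1 (p - 1) = t p"
      "\<forall>j. j \<noteq> p - 1 \<and> j \<noteq> p \<longrightarrow> t1 j = t j"
      "\<forall>x. x \<notin> t p \<longrightarrow> (x \<in> t1 p \<longleftrightarrow> x \<in> t (p - 1))"
      using bwd[OF Suc.prems(1) k ne] by blast
    have a1: "t1 (p - 1) = {X,Y}" using t1(3) Suc.prems by simp
    have qq: "q \<noteq> p - 1" "q \<noteq> p" using lt by arith+
    have a2: "t1 q = {c,X}" using t1(4) Suc.prems qq by simp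
    have cs: "cnt N c t1 = cnt N c t"
    proof (rule cnt_swap[of "p - 1" N p])
      show "p - 1 < N" "p < N" using k by arith+
      show "\<forall>k. k \<noteq> p - 1 \<and> k \<noteq> p \<longrightarrow> (c \<in> t1 k \<longleftrightarrow> c \<in> t k)" using t1(4) by simp
      show "c \<in> t1 (p - 1) \<longleftrightarrow> c \<in> t p" using a1 Suc.prems by simp
      show "c \<in> t1 p \<longleftrightarrow> c \<in> t (p - 1)" using t1(5) Suc.prems by simp
    qed
    have "d = (p - 1) - Suc q" using Suc(2) by arith
    moreover have "p - 1 < N" "q < p - 1" using lt Suc.prems by arith+
    ultimately obtain s where s: "bc_orbit_rel N t1 s" "is_ltree N s" "cnt N c t1 < cnt N c s"
      using Suc.hyps(1)[of "p - 1" t1] t1(2) a1 a2 Suc.prems by blast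
    then show ?thesis using R_trans[OF t1(1) s(1)] cs by auto
  qed
qed

lemma find_pair:
  assumes T: "is_ltree N t" and c: "c \<le> N" and k0: "k0 < N" "c \<notin> t k0"
  shows "\<exists>p q X Y. p < N \<and> q < N \<and> t p = {X,Y} \<and> t q = {c,X} \<and> c \<notin> {X,Y} \<and> X \<noteq> Y"
proof (rule ccontr)
  assume H: "\<not> ?thesis"
  define S where "S = {x. x = c \<or> (\<exists>k<N. t k = {c,x})}"
  have cl: "y \<in> S" if a: "tree_adj N t x y" "x \<in> S" for x y
  proof -
    obtain j where j: "j < N" "t j = {x,y}" using a(1) unfolding tree_adj_def by blast
    obtain a0 b0 where ab: "a0 \<noteq> b0" "t j = {a0,b0}" using edge_of[OF T j(1)] by blast
    have xy: "x \<noteq> y" using ab j by auto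
    show ?thesis
    proof (cases "x = c")
      case True then show ?thesis using j unfolding S_def by blast
    next
      case False
      then obtain k where k: "k < N" "t k = {c,x}" using a(2) unfolding S_def by blast
      show ?thesis
      proof (cases "y = c")
        case True then show ?thesis unfolding S_def by blast
      next
        case False
        then have "c \<notin> {x,y}" using \<open>x \<noteq> c\<close> by simp
        then show ?thesis using H j k xy by blast
      qed
    qed
  qed
  have reach: "(tree_adj N t)\<^sup>*\<^sup>* c y \<Longrightarrow> y \<in> S" for y
  proof (induction rule: rtranclp_induct)
    case base then show ?case unfolding S_def by simp
  next
    case (step y z) then show ?case using cl by blast
  qed
  obtain a b where ab: "a \<noteq> b" "a \<le> N" "b \<le> N" "t k0 = {a,b}" using edge_of[OF T k0(1)] by blast
  have "(tree_adj N t)\<^sup>*\<^sup>* c a" using T c ab(2) unfolding is_ltree_def by blast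
  then have "a \<in> S" by (rule reach)
  moreover have "a \<noteq> c" using k0(2) ab(4) by auto
  ultimately obtain k where k: "k < N" "t k = {c,a}" unfolding S_def by blast
  have "c \<notin> {a,b}" using k0(2) ab(4) by simp
  then show False using H k ab k0(1) by blast
qed

lemma to_star:
  assumes "is_ltree N t" "c \<le> N"
  shows "\<exists>s. bc_orbit_rel N t s \<and> is_ltree N s \<and> (\<forall>k<N. c \<in> s k)"
  using assms
proof (induction "N - cnt N c t" arbitrary: t rule: less_induct)
  case less
  show ?case
  proof (cases "\<forall>k<N. c \<in> t k")
    case True then show ?thesis using less.prems by (intro exI[of _ t]) (auto simp: bc_orbit_rel_def)
  next
    case False
    then obtain k0 where k0: "k0 < N" "c \<notin> t k0" by blast
    obtain p q X Y where pq: "p < N" "q < N" "t p = {X,Y}" "t q = {c,X}" "c \<notin> {X,Y}" "X \<noteq> Y"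
      using find_pair[OF less.prems k0] by blast
    have "p \<noteq> q" using pq by auto
    then have "p < q \<or> q < p" by arith
    then obtain s1 where s1: "bc_orbit_rel N t s1" "is_ltree N s1" "cnt N c t < cnt N c s1"
    proof
      assume "p < q" then show ?thesis using fwd_loop[OF less.prems(1) pq(2,5,6,4,3)] that by blast
    next
      assume "q < p" then show ?thesis using bwd_loop[OF less.prems(1) pq(1,5,6,4,3)] that by blast
    qed
    have "N - cnt N c s1 < N - cnt N c t" using cnt_le[of N c s1] s1(3) by arith
    then obtain s where s: "bc_orbit_rel N s1 s" "is_ltree N s" "\<forall>k<N. c \<in> s k"
      using less.hyps[of s1] s1(2) less.prems(2) by blast
    then show ?thesis using R_trans[OF s1(1) s(1)] by blast
  qed
qed

lemma lam_tree:
  assumes N: "0 < N" and T: "is_ltree N t"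
  shows "is_ltree N (lambda_move N t)"
proof (rule is_ltree_transfer[OF T])
  show "\<forall>k<N. \<exists>a b. a \<noteq> b \<and> a \<le> N \<and> b \<le> N \<and> lambda_move N t k = {a, b}"
  proof (intro allI impI)
    fix k assume k: "k < N"
    have "(k + N - 1) mod N < N" using N by simp
    then show "\<exists>a b. a \<noteq> b \<and> a \<le> N \<and> b \<le> N \<and> lambda_move N t k = {a, b}"
      using edge_of[OF T] k unfolding lambda_move_def by simp
  qed
  fix x y assume "tree_adj N t x y"
  then obtain j where j: "j < N" "t j = {x,y}" unfolding tree_adj_def by blast
  define k where "k = (j + 1) mod N"
  have k: "k < N" unfolding k_def using N by simp
  have kj: "(k + N - 1) mod N = j"
  proof (cases "j + 1 < N")
    case True
    then have "k = j + 1" unfolding k_def by simp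
    then have "k + N - 1 = j + N" by simp
    then show ?thesis using j(1) by simp
  next
    case False
    then have "j = N - 1" using j(1) by arith
    then have "k = 0" unfolding k_def using N by simp
    then show ?thesis using \<open>j = N - 1\<close> N by simp
  qed
  have "lambda_move N t k = {x,y}" unfolding lambda_move_def using k kj j by simp
  then have "tree_adj N (lambda_move N t) x y" using k by (rule adjI[rotated])
  then show "(tree_adj N (lambda_move N t))\<^sup>*\<^sup>* x y" by simp
qed

lemma lam_iso:
  assumes "ltree_iso N t t'"
  shows "ltree_iso N (lambda_move N t) (lambda_move N t')"
proof -
  obtain f where f: "bij_betw f {0..N} {0..N}" "\<forall>k<N. t' k = f ` t k"
    using assms unfolding ltree_iso_def by blast
  have "\<forall>k<N. lambda_move N t' k = f ` lambda_move N t k"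
  proof (intro allI impI)
    fix k assume k: "k < N"
    then have "(k + N - 1) mod N < N" by simp
    then show "lambda_move N t' k = f ` lambda_move N t k"
      using f(2) k unfolding lambda_move_def by simp
  qed
  then show ?thesis using f(1) unfolding ltree_iso_def by blast
qed

lemma iso_R:
  assumes N: "0 < N" and T: "is_ltree N t" "is_ltree N t'" and I: "ltree_iso N t t'"
  shows "bc_orbit_rel N t t'"
proof -
  have L: "is_ltree N (lambda_move N t')" using lam_tree[OF N T(2)] .
  have "bc_step N t (lambda_move N t')"
    unfolding bc_step_def using T(1) L lam_iso[OF I] by blast
  then have 1: "bc_orbit_rel N t (lambda_move N t')" by (rule R_of_step)
  have "bc_step N t' (lambda_move N t')"
    unfolding bc_step_def using T(2) L iso_refl by blast
  then have 2: "bc_orbit_rel N t' (lambda_move N t')" by (rule R_of_step)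
  show ?thesis using R_trans[OF 1 R_sym[OF 2]] .
qed

lemma star_param:
  assumes T: "is_ltree N s" and S: "\<forall>k<N. 0 \<in> s k"
  shows "\<exists>v. (\<forall>k<N. s k = {0, v k}) \<and> v ` {..<N} = {1..N} \<and> inj_on v {..<N}"
proof -
  have "\<forall>k\<in>{..<N}. \<exists>w. s k = {0, w} \<and> 0 < w \<and> w \<le> N"
  proof
    fix k assume "k \<in> {..<N}"
    then have k: "k < N" by simp
    obtain a b where ab: "a \<noteq> b" "a \<le> N" "b \<le> N" "s k = {a,b}" using edge_of[OF T k] by blast
    have "a = 0 \<or> b = 0" using S k ab(4) by auto
    then show "\<exists>w. s k = {0, w} \<and> 0 < w \<and> w \<le> N"
    proof
      assume "a = 0" then show ?thesis using ab by (intro exI[of _ b]) auto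
    next
      assume "b = 0" then show ?thesis using ab by (intro exI[of _ a]) (auto simp: insert_commute)
    qed
  qed
  then obtain v where v: "\<forall>k\<in>{..<N}. s k = {0, v k} \<and> 0 < v k \<and> v k \<le> N"
    by (rule bchoice[elim_format]) blast
  have img: "v ` {..<N} = {1..N}"
  proof (intro equalityI subsetI)
    fix y assume "y \<in> v ` {..<N}"
    then obtain k where "k < N" "y = v k" by blast
    then show "y \<in> {1..N}" using v by (auto simp: Suc_le_eq)
  next
    fix y assume y: "y \<in> {1..N}"
    then have "(tree_adj N s)\<^sup>*\<^sup>* 0 y" using T unfolding is_ltree_def by auto
    moreover have "y \<noteq> 0" using y by simp
    ultimately obtain x where "tree_adj N s x y" by (metis rtranclp.cases)
    then obtain j where j: "j < N" "s j = {x,y}" unfolding tree_adj_def by blast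
    then have "{x,y} = {0, v j}" using v by auto
    then have "y = v j" using \<open>y \<noteq> 0\<close> by (auto simp: doubleton_eq_iff)
    then show "y \<in> v ` {..<N}" using j by auto
  qed
  have "inj_on v {..<N}"
    by (rule eq_card_imp_inj_on) (simp_all add: img)
  then show ?thesis using v img by auto
qed

lemma star_iso:
  assumes "is_ltree N s" "is_ltree N s'" "\<forall>k<N. 0 \<in> s k" "\<forall>k<N. 0 \<in> s' k"
  shows "ltree_iso N s s'"
proof -
  obtain v where v: "\<forall>k<N. s k = {0, v k}" "v ` {..<N} = {1..N}" "inj_on v {..<N}"
    using star_param[OF assms(1,3)] by blast
  obtain w where w: "\<forall>k<N. s' k = {0, w k}" "w ` {..<N} = {1..N}" "inj_on w {..<N}"
    using star_param[OF assms(2,4)] by blast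
  define f where "f = (\<lambda>x. if x \<in> v ` {..<N} then w (inv_into {..<N} v x) else x)"
  have f0: "f 0 = 0" unfolding f_def using v(2) by auto
  have fv: "f (v k) = w k" if "k < N" for k
    unfolding f_def using that inv_into_f_f[OF v(3)] by auto
  have fimg: "f ` (v ` {..<N}) = w ` {..<N}"
    unfolding image_image using fv by (auto intro: image_cong)
  have dom: "{0..N} = insert 0 {1..N}" by auto
  have "f ` {0..N} = f ` insert 0 (v ` {..<N})" using dom v(2) by simp
  also have "\<dots> = insert 0 (w ` {..<N})" using f0 fimg by simp
  also have "\<dots> = {0..N}" using w(2) dom by simp
  finally have fall: "f ` {0..N} = {0..N}" .
  have "inj_on f {0..N}" by (rule eq_card_imp_inj_on) (simp_all add: fall)
  then have bij: "bij_betw f {0..N} {0..N}" unfolding bij_betw_def using fall by simp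
  have "\<forall>k<N. s' k = f ` s k" using v(1) w(1) f0 fv by simp
  then show ?thesis unfolding ltree_iso_def using bij by blast
qed

theorem mainTheorem11:
  fixes N :: nat and t t' :: ltree
  assumes "N \<ge> 2" and "is_ltree N t" and "is_ltree N t'"
  shows "bc_orbit_rel N t t'"
proof -
  have N: "0 < N" using assms(1) by simp
  obtain s where s: "bc_orbit_rel N t s" "is_ltree N s" "\<forall>k<N. 0 \<in> s k"
    using to_star[OF assms(2), of 0] by blast
  obtain s' where s': "bc_orbit_rel N t' s'" "is_ltree N s'" "\<forall>k<N. 0 \<in> s' k"
    using to_star[OF assms(3), of 0] by blast
  have "bc_orbit_rel N s s'" using iso_R[OF N s(2) s'(2) star_iso[OF s(2) s'(2) s(3) s'(3)]] .
  then show ?thesis using R_trans[OF R_trans[OF s(1)] R_sym[OF s'(1)]] by blast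
qed

end
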